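(* Let $f$ be a scale mixture of normals density with shape parameter $\delta\in\Delta$. Consider the accelerated failure time model $y_j=\log(T_j)={\bf x}_j^\top\bm\beta+\varepsilon_j$, $j=1,\dots,n$, for survival times $T_1,\dots,T_n$, where $\bm\beta\in\mathbb{R}^p$, ${\bf X}=({\bf x}_1^\top,\dots,{\bf x}_n^\top)^\top$ is a known $n\times p$ design matrix of full column rank, and $\varepsilon_j\stackrel{i.i.d.}{\sim}\mathrm{TP}(0,\sigma,\delta,\gamma;f)$, with prior $\pi(\bm\beta,\sigma,\delta,\gamma)\propto\pi(\gamma)\pi(\delta)/\sigma^{q}$, $q\ge0$, $\pi(\gamma),\pi(\delta)$ proper. Suppose that $n_c\le n$ of the survival times are censored and $n_o=n-n_c$ are observed, and let ${\bf y}_o$ denote the uncensored (log) observations and ${\bf X}_o$ the corresponding design submatrix. If the posterior distribution of $(\bm\beta,\sigma,\delta,\gamma)$ based only on the $n_o$ uncensored observations (i.e. on the model for ${\bf y}_o$ with design matrix ${\bf X}_o$ and the same prior) is proper, then the posterior distribution of $(\bm\beta,\sigma,\delta,\gamma)$ based on the full (censored and uncensored) sample is proper.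
   Context: A scale mixture of normals density is $f(z\mid\delta)=\int_{\mathbb{R}_+}\tau^{1/2}\phi(\tau^{1/2}z)\,dH(\tau\mid\delta)$ with $\phi$ the standard normal density and $H(\cdot\mid\delta)$ a mixing distribution on $\mathbb{R}_+$. The two-piece distribution $\mathrm{TP}(\mu,\sigma,\delta,\gamma;f)$ has density $g(z)=\frac{2}{\sigma[a(\gamma)+b(\gamma)]}\left[f\!\left(\frac{z-\mu}{\sigma b(\gamma)}\Big|\delta\right)I(z<\mu)+f\!\left(\frac{z-\mu}{\sigma a(\gamma)}\Big|\delta\right)I(z\ge\mu)\right]$, $z\in\mathbb{R}$, with $\mu\in\mathbb{R}$, $\sigma>0$, $\gamma\in\Gamma\subset\mathbb{R}$, and $a(\cdot),b(\cdot)$ given positive functions on $\Gamma$. In the likelihood, an uncensored observation contributes the density $g(y_j-{\bf x}_j^\top\bm\beta)$ (with $\mu=0$) and a censored observation contributes the probability, under this error distribution, that $y_j$ lies in its censoring set (e.g. $(\log T_j,\infty)$ for right censoring, or an interval for interval censoring). The posterior is proper if likelihood times prior has finite integral. *)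

theory Defs
  imports "HOL-Probability.Probability"
begin

text \<open>Mixing distributions: a kernel from the shape-parameter space (measure space MD,
  carrier = Delta) to probability distributions on the nonnegative reals.\<close>
definition mixing_kernel :: "'d measure \<Rightarrow> ('d \<Rightarrow> real measure) \<Rightarrow> bool" where
  "mixing_kernel MD H \<longleftrightarrow> H \<in> measurable MD (subprob_algebra borel) \<and>
     (\<forall>\<delta>\<in>space MD. prob_space (H \<delta>) \<and> sets (H \<delta>) = sets borel \<and> emeasure (H \<delta>) {..<0} = 0)"

definition smn_density :: "('d \<Rightarrow> real measure) \<Rightarrow> real \<Rightarrow> 'd \<Rightarrow> ennreal" where
  "smn_density H z \<delta> = (\<integral>\<^sup>+\<tau>. ennreal (sqrt \<tau> * std_normal_density (sqrt \<tau> * z)) \<partial>(H \<delta>))"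

definition tp_density :: "(real \<Rightarrow> 'd \<Rightarrow> ennreal) \<Rightarrow> (real \<Rightarrow> real) \<Rightarrow> (real \<Rightarrow> real) \<Rightarrow>
    real \<Rightarrow> real \<Rightarrow> 'd \<Rightarrow> real \<Rightarrow> real \<Rightarrow> ennreal" where
  "tp_density f a b \<mu> \<sigma> \<delta> \<gamma> z =
     ennreal (2 / (\<sigma> * (a \<gamma> + b \<gamma>))) *
     (if z < \<mu> then f ((z - \<mu>) / (\<sigma> * b \<gamma>)) \<delta> else f ((z - \<mu>) / (\<sigma> * a \<gamma>)) \<delta>)"

definition lik_uncens :: "(real \<Rightarrow> 'd \<Rightarrow> ennreal) \<Rightarrow> (real \<Rightarrow> real) \<Rightarrow> (real \<Rightarrow> real) \<Rightarrow>
    real^'p^'n \<Rightarrow> real^'n \<Rightarrow> 'n set \<Rightarrow> real^'p \<Rightarrow> real \<Rightarrow> 'd \<Rightarrow> real \<Rightarrow> ennreal" where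
  "lik_uncens f a b X y Obs \<beta> \<sigma> \<delta> \<gamma> =
     (\<Prod>j\<in>Obs. tp_density f a b 0 \<sigma> \<delta> \<gamma> (y $ j - (X *v \<beta>) $ j))"

text \<open>Full likelihood: uncensored observations contribute the density, censored ones
  (indices not in Obs) the probability that y_j lies in its censoring set C j.\<close>
definition lik_full :: "(real \<Rightarrow> 'd \<Rightarrow> ennreal) \<Rightarrow> (real \<Rightarrow> real) \<Rightarrow> (real \<Rightarrow> real) \<Rightarrow>
    real^'p^'n::finite \<Rightarrow> real^'n \<Rightarrow> 'n set \<Rightarrow> ('n \<Rightarrow> real set) \<Rightarrow>
    real^'p \<Rightarrow> real \<Rightarrow> 'd \<Rightarrow> real \<Rightarrow> ennreal" where
  "lik_full f a b X y Obs C \<beta> \<sigma> \<delta> \<gamma> =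
     lik_uncens f a b X y Obs \<beta> \<sigma> \<delta> \<gamma> *
     (\<Prod>j\<in>UNIV - Obs. \<integral>\<^sup>+z. indicator (C j) z * tp_density f a b 0 \<sigma> \<delta> \<gamma> (z - (X *v \<beta>) $ j) \<partial>lborel)"

definition post_mass :: "'d measure \<Rightarrow> ('d \<Rightarrow> real) \<Rightarrow> real set \<Rightarrow> (real \<Rightarrow> real) \<Rightarrow> real \<Rightarrow>
    (real^'p::finite \<Rightarrow> real \<Rightarrow> 'd \<Rightarrow> real \<Rightarrow> ennreal) \<Rightarrow> ennreal" where
  "post_mass MD pd \<Gamma> pg q L =
     (\<integral>\<^sup>+\<gamma>. indicator \<Gamma> \<gamma> * (\<integral>\<^sup>+\<delta>. (\<integral>\<^sup>+\<sigma>. indicator {0<..} \<sigma> *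
        (\<integral>\<^sup>+\<beta>. L \<beta> \<sigma> \<delta> \<gamma> * ennreal (pg \<gamma> * pd \<delta> / \<sigma> powr q) \<partial>lborel) \<partial>lborel) \<partial>MD) \<partial>lborel)"

definition posterior_proper :: "'d measure \<Rightarrow> ('d \<Rightarrow> real) \<Rightarrow> real set \<Rightarrow> (real \<Rightarrow> real) \<Rightarrow> real \<Rightarrow>
    (real^'p::finite \<Rightarrow> real \<Rightarrow> 'd \<Rightarrow> real \<Rightarrow> ennreal) \<Rightarrow> bool" where
  "posterior_proper MD pd \<Gamma> pg q L \<longleftrightarrow> post_mass MD pd \<Gamma> pg q L < \<infinity>"

end

theory Submission
  imports Defs
begin

lemma nn_cmult_ge:
  fixes c :: ennreal
  shows "c * integral\<^sup>N M f \<le> (\<integral>\<^sup>+x. c * f x \<partial>M)"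
proof -
  have "c * integral\<^sup>N M f = (SUP g\<in>{g. simple_function M g \<and> g \<le> f}. c * integral\<^sup>S M g)"
    unfolding nn_integral_def by (simp add: SUP_mult_left_ennreal)
  also have "\<dots> \<le> (\<integral>\<^sup>+x. c * f x \<partial>M)"
  proof (rule SUP_least)
    fix g assume g: "g \<in> {g. simple_function M g \<and> g \<le> f}"
    have sg: "simple_function M (\<lambda>x. c * g x)"
      using g by (auto intro: simple_function_compose1[where g="\<lambda>y. c * y"])
    have "c * integral\<^sup>S M g = (\<integral>\<^sup>Sx. c * g x \<partial>M)" using g by simp
    also have "\<dots> \<le> (\<integral>\<^sup>+x. c * f x \<partial>M)"
      unfolding nn_integral_def
      by (rule SUP_upper) (use g sg in \<open>auto simp: le_fun_def intro: mult_left_mono\<close>)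
    finally show "c * integral\<^sup>S M g \<le> (\<integral>\<^sup>+x. c * f x \<partial>M)" .
  qed
  finally show ?thesis .
qed

lemma nn_cmult_le:
  fixes c :: ennreal
  assumes "c \<noteq> 0" "c \<noteq> \<infinity>"
  shows "(\<integral>\<^sup>+x. c * f x \<partial>M) \<le> c * integral\<^sup>N M f"
proof -
  have ic: "inverse c * c = 1" "c * inverse c = 1"
    using ennreal_divide_self[of c] assms
    by (auto simp: divide_ennreal_def mult.commute top.not_eq_extremum)
  have "inverse c * (\<integral>\<^sup>+x. c * f x \<partial>M) \<le> (\<integral>\<^sup>+x. inverse c * (c * f x) \<partial>M)"
    by (rule nn_cmult_ge)
  also have "\<dots> = integral\<^sup>N M f"
    by (simp add: mult.assoc[symmetric] ic)
  finally have "c * (inverse c * (\<integral>\<^sup>+x. c * f x \<partial>M)) \<le> c * integral\<^sup>N M f"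
    by (rule mult_left_mono) simp
  then show ?thesis by (simp add: mult.assoc[symmetric] ic)
qed

lemma kern_meas:
  assumes "sets N = sets borel"
  shows "(\<lambda>(\<tau>::real, z::real). ennreal (sqrt \<tau> * std_normal_density (sqrt \<tau> * z)))
          \<in> borel_measurable (N \<Otimes>\<^sub>M lborel)"
    and "(\<lambda>(z::real, \<tau>::real). ennreal (sqrt \<tau> * std_normal_density (sqrt \<tau> * z)))
          \<in> borel_measurable (lborel \<Otimes>\<^sub>M N)"
proof -
  have e1: "sets (N \<Otimes>\<^sub>M lborel) = sets (borel \<Otimes>\<^sub>M borel)"
    by (rule sets_pair_measure_cong) (auto simp: assms)
  have e2: "sets (lborel \<Otimes>\<^sub>M N) = sets (borel \<Otimes>\<^sub>M borel)"
    by (rule sets_pair_measure_cong) (auto simp: assms)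
  have "(\<lambda>(\<tau>::real, z::real). ennreal (sqrt \<tau> * std_normal_density (sqrt \<tau> * z)))
          \<in> borel_measurable (borel \<Otimes>\<^sub>M borel)" by measurable
  then show "(\<lambda>(\<tau>::real, z::real). ennreal (sqrt \<tau> * std_normal_density (sqrt \<tau> * z)))
          \<in> borel_measurable (N \<Otimes>\<^sub>M lborel)"
    using measurable_cong_sets[OF e1 refl] by blast
  have "(\<lambda>(z::real, \<tau>::real). ennreal (sqrt \<tau> * std_normal_density (sqrt \<tau> * z)))
          \<in> borel_measurable (borel \<Otimes>\<^sub>M borel)" by measurable
  then show "(\<lambda>(z::real, \<tau>::real). ennreal (sqrt \<tau> * std_normal_density (sqrt \<tau> * z)))
          \<in> borel_measurable (lborel \<Otimes>\<^sub>M N)"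
    using measurable_cong_sets[OF e2 refl] by blast
qed

lemma inner_le1: "(\<integral>\<^sup>+z. ennreal (sqrt \<tau> * std_normal_density (sqrt \<tau> * z)) \<partial>lborel) \<le> 1"
proof (cases "\<tau> > 0")
  case False
  then have "sqrt \<tau> * std_normal_density (sqrt \<tau> * z) \<le> 0" for z
    by (intro mult_nonpos_nonneg) auto
  then have "(\<integral>\<^sup>+z. ennreal (sqrt \<tau> * std_normal_density (sqrt \<tau> * z)) \<partial>lborel) = 0"
    by (subst nn_integral_cong[where v="\<lambda>_. 0"]) (auto simp: ennreal_eq_0_iff)
  then show ?thesis by simp
next
  case True
  define s where "s = sqrt \<tau>"
  have s: "s > 0" using True by (simp add: s_def)
  have one: "(\<integral>\<^sup>+x. ennreal (std_normal_density x) \<partial>lborel) = 1"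
    using integrable_normal_moment[of 0 1 0]
    by (subst nn_integral_eq_integral) auto
  have "(\<integral>\<^sup>+x. ennreal (std_normal_density x) \<partial>lborel)
        = \<bar>s\<bar> * (\<integral>\<^sup>+x. ennreal (std_normal_density (0 + s * x)) \<partial>lborel)"
    by (rule nn_integral_real_affine) (use s in auto)
  also have "\<dots> = (\<integral>\<^sup>+x. ennreal s * ennreal (std_normal_density (s * x)) \<partial>lborel)"
    using s by (subst nn_integral_cmult) auto
  also have "\<dots> = (\<integral>\<^sup>+z. ennreal (sqrt \<tau> * std_normal_density (sqrt \<tau> * z)) \<partial>lborel)"
    using s by (simp add: s_def ennreal_mult)
  finally show ?thesis using one by simp
qed

lemma smn_meas:
  assumes "sets (H \<delta>) = sets borel" "prob_space (H \<delta>)"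
  shows "(\<lambda>z. smn_density H z \<delta>) \<in> borel_measurable borel"
proof -
  interpret prob_space "H \<delta>" by fact
  have "(\<lambda>z. \<integral>\<^sup>+\<tau>. ennreal (sqrt \<tau> * std_normal_density (sqrt \<tau> * z)) \<partial>(H \<delta>)) \<in> borel_measurable lborel"
    by (rule borel_measurable_nn_integral) (rule kern_meas(2)[OF assms(1)])
  then show ?thesis unfolding smn_density_def by simp
qed

lemma smn_int_le1:
  assumes "sets (H \<delta>) = sets borel" "prob_space (H \<delta>)"
  shows "(\<integral>\<^sup>+z. smn_density H z \<delta> \<partial>lborel) \<le> 1"
proof -
  interpret prob_space "H \<delta>" by fact
  interpret P: pair_sigma_finite "H \<delta>" lborel
    by (intro pair_sigma_finite.intro sigma_finite_measure_axioms lborel.sigma_finite_measure_axioms)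
  have "(\<integral>\<^sup>+z. smn_density H z \<delta> \<partial>lborel)
     = (\<integral>\<^sup>+\<tau>. (\<integral>\<^sup>+z. ennreal (sqrt \<tau> * std_normal_density (sqrt \<tau> * z)) \<partial>lborel) \<partial>(H \<delta>))"
    unfolding smn_density_def
    by (rule P.Fubini') (rule kern_meas(1)[OF assms(1)])
  also have "\<dots> \<le> (\<integral>\<^sup>+\<tau>. 1 \<partial>(H \<delta>))"
    by (rule nn_integral_mono) (rule inner_le1)
  also have "\<dots> = 1" by (simp add: emeasure_space_1)
  finally show ?thesis .
qed

lemma scaled_int_le:
  fixes F :: "real \<Rightarrow> ennreal"
  assumes meas[measurable]: "F \<in> borel_measurable borel" and int: "(\<integral>\<^sup>+z. F z \<partial>lborel) \<le> 1"
    and s: "s > 0"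
  shows "(\<integral>\<^sup>+z. F (z / s) \<partial>lborel) \<le> ennreal s"
proof -
  have "(\<integral>\<^sup>+z. F (z / s) \<partial>lborel) = \<bar>s\<bar> * (\<integral>\<^sup>+x. F ((0 + s * x) / s) \<partial>lborel)"
    by (rule nn_integral_real_affine) (use s in auto)
  also have "\<dots> = ennreal s * (\<integral>\<^sup>+x. F x \<partial>lborel)" using s by simp
  also have "\<dots> \<le> ennreal s * 1" by (rule mult_left_mono[OF int]) simp
  finally show ?thesis by simp
qed

lemma tp_le2:
  fixes F :: "real \<Rightarrow> 'd \<Rightarrow> ennreal"
  assumes meas[measurable]: "(\<lambda>z. F z \<delta>) \<in> borel_measurable borel"
    and int: "(\<integral>\<^sup>+z. F z \<delta> \<partial>lborel) \<le> 1"
    and \<sigma>: "\<sigma> > 0" and a: "a \<gamma> > 0" and b: "b \<gamma> > 0"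
  shows "(\<integral>\<^sup>+z. indicator D z * tp_density F a b 0 \<sigma> \<delta> \<gamma> (z - m) \<partial>lborel) \<le> 2"
proof -
  define K where "K = ennreal (2 / (\<sigma> * (a \<gamma> + b \<gamma>)))"
  define G where "G = (\<lambda>z. F z \<delta>)"
  have Gm[measurable]: "G \<in> borel_measurable borel" unfolding G_def by fact
  have tp: "tp_density F a b 0 \<sigma> \<delta> \<gamma> = (\<lambda>z. K * (if z < 0 then G (z / (\<sigma> * b \<gamma>)) else G (z / (\<sigma> * a \<gamma>))))"
    by (auto simp: tp_density_def K_def G_def fun_eq_iff)
  have tpm[measurable]: "tp_density F a b 0 \<sigma> \<delta> \<gamma> \<in> borel_measurable borel"
    unfolding tp by measurable
  have "(\<integral>\<^sup>+z. indicator D z * tp_density F a b 0 \<sigma> \<delta> \<gamma> (z - m) \<partial>lborel)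
       \<le> (\<integral>\<^sup>+z. tp_density F a b 0 \<sigma> \<delta> \<gamma> (-m + 1 * z) \<partial>lborel)"
    by (rule nn_integral_mono) (auto split: split_indicator)
  also have "\<dots> = (\<integral>\<^sup>+z. tp_density F a b 0 \<sigma> \<delta> \<gamma> z \<partial>lborel)"
    using nn_integral_real_affine[OF tpm, of 1 "-m"] by simp
  also have "\<dots> \<le> (\<integral>\<^sup>+z. K * G (z / (\<sigma> * b \<gamma>)) + K * G (z / (\<sigma> * a \<gamma>)) \<partial>lborel)"
    unfolding tp proof (rule nn_integral_mono)
    fix z
    show "K * (if z < 0 then G (z / (\<sigma> * b \<gamma>)) else G (z / (\<sigma> * a \<gamma>)))
          \<le> K * G (z / (\<sigma> * b \<gamma>)) + K * G (z / (\<sigma> * a \<gamma>))"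
    proof (cases "z < 0")
      case True then show ?thesis by (simp add: add_increasing2)
    next
      case False then show ?thesis by (simp add: add_increasing)
    qed
  qed
  also have "\<dots> = K * (\<integral>\<^sup>+z. G (z / (\<sigma> * b \<gamma>)) \<partial>lborel) + K * (\<integral>\<^sup>+z. G (z / (\<sigma> * a \<gamma>)) \<partial>lborel)"
    by (simp add: nn_integral_add nn_integral_cmult)
  also have "\<dots> \<le> K * ennreal (\<sigma> * b \<gamma>) + K * ennreal (\<sigma> * a \<gamma>)"
    using \<sigma> a b int
    by (intro add_mono mult_left_mono scaled_int_le[OF Gm]) (auto simp: G_def)
  also have "\<dots> = 2"
  proof -
    define x where "x = \<sigma> * b \<gamma>"
    define y where "y = \<sigma> * a \<gamma>"
    define k where "k = 2 / (\<sigma> * (a \<gamma> + b \<gamma>))"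
    have x: "x \<ge> 0" and y: "y \<ge> 0" and k: "k \<ge> 0"
      using \<sigma> a b by (simp_all add: x_def y_def k_def)
    have t: "x + y > 0" using \<sigma> a b by (simp add: x_def y_def add_pos_pos)
    have e: "\<sigma> * (a \<gamma> + b \<gamma>) = x + y" by (simp add: x_def y_def algebra_simps)
    have kxy: "k * (x + y) = 2" unfolding k_def e using t by (simp add: field_simps)
    have "K * ennreal x + K * ennreal y = K * ennreal (x + y)"
      using x y by (simp add: distrib_left[symmetric] ennreal_plus)
    also have "\<dots> = ennreal (k * (x + y))"
      unfolding K_def k_def[symmetric] using k x y by (simp add: ennreal_mult)
    also have "\<dots> = 2" by (simp add: kxy)
    finally show ?thesis by (simp add: x_def y_def)
  qed
  finally show ?thesis .
qed


theorem theorem4p1: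
  fixes MD :: "'d measure" and H :: "'d \<Rightarrow> real measure"
    and a b :: "real \<Rightarrow> real" and \<Gamma> :: "real set"
    and X :: "real^'p::finite^'n::finite" and y :: "real^'n"
    and Obs :: "'n set" and C :: "'n \<Rightarrow> real set"
    and q :: real and pg :: "real \<Rightarrow> real" and pd :: "'d \<Rightarrow> real"
  assumes H: "mixing_kernel MD H"
    and ab_pos: "\<forall>\<gamma>\<in>\<Gamma>. a \<gamma> > 0 \<and> b \<gamma> > 0"
    and Gamma_meas: "\<Gamma> \<in> sets borel"
    and rankX: "rank X = CARD('p)"
    and C_meas: "\<forall>j. j \<notin> Obs \<longrightarrow> C j \<in> sets borel"
    and q: "q \<ge> 0"
    and pg_meas: "pg \<in> borel_measurable borel" and pg_nonneg: "\<forall>\<gamma>. pg \<gamma> \<ge> 0"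
    and pg_proper: "(\<integral>\<^sup>+\<gamma>. indicator \<Gamma> \<gamma> * ennreal (pg \<gamma>) \<partial>lborel) = 1"
    and pd_meas: "pd \<in> borel_measurable MD" and pd_nonneg: "\<forall>\<delta>\<in>space MD. pd \<delta> \<ge> 0"
    and pd_proper: "(\<integral>\<^sup>+\<delta>. ennreal (pd \<delta>) \<partial>MD) = 1"
    and unc: "posterior_proper MD pd \<Gamma> pg q (lik_uncens (smn_density H) a b X y Obs)"
  shows "posterior_proper MD pd \<Gamma> pg q (lik_full (smn_density H) a b X y Obs C)"
proof -
  let ?Lu = "lik_uncens (smn_density H) a b X y Obs"
  let ?Lf = "lik_full (smn_density H) a b X y Obs C"
  define c :: ennreal where "c = 2 ^ card (UNIV - Obs)"
  have c0: "c \<noteq> 0" and cT: "c \<noteq> \<infinity>" unfolding c_def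
    by (auto simp: power_eq_top_ennreal)
  have Hd: "prob_space (H \<delta>)" "sets (H \<delta>) = sets borel" if "\<delta> \<in> space MD" for \<delta>
    using H that unfolding mixing_kernel_def by auto
  have pt: "?Lf \<beta> \<sigma> \<delta> \<gamma> \<le> c * ?Lu \<beta> \<sigma> \<delta> \<gamma>"
    if g: "\<gamma> \<in> \<Gamma>" and s: "\<sigma> > 0" and d: "\<delta> \<in> space MD" for \<beta> \<sigma> \<delta> \<gamma>
  proof -
    have "(\<Prod>j\<in>UNIV - Obs. \<integral>\<^sup>+z. indicator (C j) z * tp_density (smn_density H) a b 0 \<sigma> \<delta> \<gamma> (z - (X *v \<beta>) $ j) \<partial>lborel)
       \<le> (\<Prod>j\<in>UNIV - Obs. 2)"
    proof (rule prod_mono_ennreal)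
      fix j
      show "(\<integral>\<^sup>+z. indicator (C j) z * tp_density (smn_density H) a b 0 \<sigma> \<delta> \<gamma> (z - (X *v \<beta>) $ j) \<partial>lborel) \<le> 2"
        using ab_pos g s smn_meas[of H \<delta>, OF Hd(2)[OF d] Hd(1)[OF d]] smn_int_le1[of H \<delta>, OF Hd(2)[OF d] Hd(1)[OF d]]
        by (intro tp_le2) simp_all
    qed
    also have "\<dots> = c" by (simp add: c_def)
    finally show ?thesis unfolding lik_full_def
      by (subst mult.commute) (rule mult_left_mono, assumption, simp)
  qed
  let ?P = "\<lambda>\<sigma> \<delta> \<gamma>. ennreal (pg \<gamma> * pd \<delta> / \<sigma> powr q)"
  have "post_mass MD pd \<Gamma> pg q ?Lf \<le> c * post_mass MD pd \<Gamma> pg q ?Lu"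
    unfolding post_mass_def
  proof -
    have lvl\<beta>: "(\<integral>\<^sup>+\<beta>. ?Lf \<beta> \<sigma> \<delta> \<gamma> * ?P \<sigma> \<delta> \<gamma> \<partial>lborel) \<le> c * (\<integral>\<^sup>+\<beta>. ?Lu \<beta> \<sigma> \<delta> \<gamma> * ?P \<sigma> \<delta> \<gamma> \<partial>lborel)"
      if "\<gamma> \<in> \<Gamma>" "\<sigma> > 0" "\<delta> \<in> space MD" for \<sigma> \<delta> \<gamma>
    proof -
      have "(\<integral>\<^sup>+\<beta>. ?Lf \<beta> \<sigma> \<delta> \<gamma> * ?P \<sigma> \<delta> \<gamma> \<partial>lborel) \<le> (\<integral>\<^sup>+\<beta>. c * (?Lu \<beta> \<sigma> \<delta> \<gamma> * ?P \<sigma> \<delta> \<gamma>) \<partial>lborel)"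
        by (rule nn_integral_mono) (simp add: mult.assoc[symmetric] mult_right_mono pt[OF that])
      also have "\<dots> \<le> c * (\<integral>\<^sup>+\<beta>. ?Lu \<beta> \<sigma> \<delta> \<gamma> * ?P \<sigma> \<delta> \<gamma> \<partial>lborel)"
        by (rule nn_cmult_le[OF c0 cT])
      finally show ?thesis .
    qed
    have lvl\<sigma>: "(\<integral>\<^sup>+\<sigma>. indicator {0<..} \<sigma> * (\<integral>\<^sup>+\<beta>. ?Lf \<beta> \<sigma> \<delta> \<gamma> * ?P \<sigma> \<delta> \<gamma> \<partial>lborel) \<partial>lborel)
       \<le> c * (\<integral>\<^sup>+\<sigma>. indicator {0<..} \<sigma> * (\<integral>\<^sup>+\<beta>. ?Lu \<beta> \<sigma> \<delta> \<gamma> * ?P \<sigma> \<delta> \<gamma> \<partial>lborel) \<partial>lborel)"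
      if "\<gamma> \<in> \<Gamma>" "\<delta> \<in> space MD" for \<delta> \<gamma>
    proof -
      have "(\<integral>\<^sup>+\<sigma>. indicator {0<..} \<sigma> * (\<integral>\<^sup>+\<beta>. ?Lf \<beta> \<sigma> \<delta> \<gamma> * ?P \<sigma> \<delta> \<gamma> \<partial>lborel) \<partial>lborel)
         \<le> (\<integral>\<^sup>+\<sigma>. c * (indicator {0<..} \<sigma> * (\<integral>\<^sup>+\<beta>. ?Lu \<beta> \<sigma> \<delta> \<gamma> * ?P \<sigma> \<delta> \<gamma> \<partial>lborel)) \<partial>lborel)"
      proof (rule nn_integral_mono)
        fix \<sigma> :: real
        show "indicator {0<..} \<sigma> * (\<integral>\<^sup>+\<beta>. ?Lf \<beta> \<sigma> \<delta> \<gamma> * ?P \<sigma> \<delta> \<gamma> \<partial>lborel) \<le> c * (indicator {0<..} \<sigma> * (\<integral>\<^sup>+\<beta>. ?Lu \<beta> \<sigma> \<delta> \<gamma> * ?P \<sigma> \<delta> \<gamma> \<partial>lborel))"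
        proof (cases "\<sigma> > 0")
          case True
          then show ?thesis using lvl\<beta>[OF that(1) True that(2)] by simp
        next
          case False
          then show ?thesis by simp
        qed
      qed
      also have "\<dots> \<le> c * (\<integral>\<^sup>+\<sigma>. indicator {0<..} \<sigma> * (\<integral>\<^sup>+\<beta>. ?Lu \<beta> \<sigma> \<delta> \<gamma> * ?P \<sigma> \<delta> \<gamma> \<partial>lborel) \<partial>lborel)"
        by (rule nn_cmult_le[OF c0 cT])
      finally show ?thesis .
    qed
    have lvl\<delta>: "(\<integral>\<^sup>+\<delta>. (\<integral>\<^sup>+\<sigma>. indicator {0<..} \<sigma> * (\<integral>\<^sup>+\<beta>. ?Lf \<beta> \<sigma> \<delta> \<gamma> * ?P \<sigma> \<delta> \<gamma> \<partial>lborel) \<partial>lborel) \<partial>MD)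
       \<le> c * (\<integral>\<^sup>+\<delta>. (\<integral>\<^sup>+\<sigma>. indicator {0<..} \<sigma> * (\<integral>\<^sup>+\<beta>. ?Lu \<beta> \<sigma> \<delta> \<gamma> * ?P \<sigma> \<delta> \<gamma> \<partial>lborel) \<partial>lborel) \<partial>MD)"
      if "\<gamma> \<in> \<Gamma>" for \<gamma>
    proof -
      have "(\<integral>\<^sup>+\<delta>. (\<integral>\<^sup>+\<sigma>. indicator {0<..} \<sigma> * (\<integral>\<^sup>+\<beta>. ?Lf \<beta> \<sigma> \<delta> \<gamma> * ?P \<sigma> \<delta> \<gamma> \<partial>lborel) \<partial>lborel) \<partial>MD)
         \<le> (\<integral>\<^sup>+\<delta>. c * (\<integral>\<^sup>+\<sigma>. indicator {0<..} \<sigma> * (\<integral>\<^sup>+\<beta>. ?Lu \<beta> \<sigma> \<delta> \<gamma> * ?P \<sigma> \<delta> \<gamma> \<partial>lborel) \<partial>lborel) \<partial>MD)"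
        by (rule nn_integral_mono) (rule lvl\<sigma>[OF that])
      also have "\<dots> \<le> c * (\<integral>\<^sup>+\<delta>. (\<integral>\<^sup>+\<sigma>. indicator {0<..} \<sigma> * (\<integral>\<^sup>+\<beta>. ?Lu \<beta> \<sigma> \<delta> \<gamma> * ?P \<sigma> \<delta> \<gamma> \<partial>lborel) \<partial>lborel) \<partial>MD)"
        by (rule nn_cmult_le[OF c0 cT])
      finally show ?thesis .
    qed
    have "(\<integral>\<^sup>+\<gamma>. indicator \<Gamma> \<gamma> * (\<integral>\<^sup>+\<delta>. (\<integral>\<^sup>+\<sigma>. indicator {0<..} \<sigma> * (\<integral>\<^sup>+\<beta>. ?Lf \<beta> \<sigma> \<delta> \<gamma> * ?P \<sigma> \<delta> \<gamma> \<partial>lborel) \<partial>lborel) \<partial>MD) \<partial>lborel)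
       \<le> (\<integral>\<^sup>+\<gamma>. c * (indicator \<Gamma> \<gamma> * (\<integral>\<^sup>+\<delta>. (\<integral>\<^sup>+\<sigma>. indicator {0<..} \<sigma> * (\<integral>\<^sup>+\<beta>. ?Lu \<beta> \<sigma> \<delta> \<gamma> * ?P \<sigma> \<delta> \<gamma> \<partial>lborel) \<partial>lborel) \<partial>MD)) \<partial>lborel)"
    proof (rule nn_integral_mono)
      fix \<gamma> :: real
      show "indicator \<Gamma> \<gamma> * (\<integral>\<^sup>+\<delta>. (\<integral>\<^sup>+\<sigma>. indicator {0<..} \<sigma> * (\<integral>\<^sup>+\<beta>. ?Lf \<beta> \<sigma> \<delta> \<gamma> * ?P \<sigma> \<delta> \<gamma> \<partial>lborel) \<partial>lborel) \<partial>MD)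
       \<le> c * (indicator \<Gamma> \<gamma> * (\<integral>\<^sup>+\<delta>. (\<integral>\<^sup>+\<sigma>. indicator {0<..} \<sigma> * (\<integral>\<^sup>+\<beta>. ?Lu \<beta> \<sigma> \<delta> \<gamma> * ?P \<sigma> \<delta> \<gamma> \<partial>lborel) \<partial>lborel) \<partial>MD))"
      proof (cases "\<gamma> \<in> \<Gamma>")
        case True
        then show ?thesis using lvl\<delta>[OF True] by simp
      next
        case False
        then show ?thesis by simp
      qed
    qed
    also have "\<dots> \<le> c * (\<integral>\<^sup>+\<gamma>. indicator \<Gamma> \<gamma> * (\<integral>\<^sup>+\<delta>. (\<integral>\<^sup>+\<sigma>. indicator {0<..} \<sigma> * (\<integral>\<^sup>+\<beta>. ?Lu \<beta> \<sigma> \<delta> \<gamma> * ?P \<sigma> \<delta> \<gamma> \<partial>lborel) \<partial>lborel) \<partial>MD) \<partial>lborel)"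
      by (rule nn_cmult_le[OF c0 cT])
    finally show "(\<integral>\<^sup>+\<gamma>. indicator \<Gamma> \<gamma> * (\<integral>\<^sup>+\<delta>. (\<integral>\<^sup>+\<sigma>. indicator {0<..} \<sigma> * (\<integral>\<^sup>+\<beta>. ?Lf \<beta> \<sigma> \<delta> \<gamma> * ?P \<sigma> \<delta> \<gamma> \<partial>lborel) \<partial>lborel) \<partial>MD) \<partial>lborel)
       \<le> c * (\<integral>\<^sup>+\<gamma>. indicator \<Gamma> \<gamma> * (\<integral>\<^sup>+\<delta>. (\<integral>\<^sup>+\<sigma>. indicator {0<..} \<sigma> * (\<integral>\<^sup>+\<beta>. ?Lu \<beta> \<sigma> \<delta> \<gamma> * ?P \<sigma> \<delta> \<gamma> \<partial>lborel) \<partial>lborel) \<partial>MD) \<partial>lborel)" .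
  qed
  also have "\<dots> < \<infinity>"
    using unc cT unfolding posterior_proper_def
    by (simp add: ennreal_mult_less_top top.not_eq_extremum)
  finally show ?thesis unfolding posterior_proper_def .
qed

end
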